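(* Let $X$ be a minimal dendric shift over $\mathcal{A}$ which is planar for $(\le^L,\le^R)$. (1) Every long enough left special factor $w$ of $X$ satisfies $E^L_X(w)=\{a,b\}$ where $a,b$ are consecutive for $\le^L$; moreover, for any two $\le^L$-consecutive letters $a,b$ and every $n\in\mathbb{N}$, there is a unique left special factor $w$ of length $n$ with $\{a,b\}\subseteq E^L_X(w)$. (2) Every long enough right special factor $w$ satisfies $E^R_X(w)=\{a,b\}$ where $a,b$ are consecutive for $\le^R$; moreover, for any two $\le^R$-consecutive letters $a,b$ and every $n\in\mathbb{N}$, there is a unique right special factor $w$ of length $n$ with $\{a,b\}\subseteq E^R_X(w)$.
   Context: A shift space over a finite alphabet $\mathcal{A}$ is a nonempty closed shift-invariant $X\subseteq\mathcal{A}^{\mathbb{Z}}$ with all letters in its language $\mathcal{L}(X)$; minimal if no nonempty proper closed shift-invariant subset. For $w\in\mathcal{L}(X)$: $E^L_X(w)=\{a:aw\in\mathcal{L}(X)\}$, $E^R_X(w)=\{b:wb\in\mathcal{L}(X)\}$, $E_X(w)=\{(a,b):awb\in\mathcal{L}(X)\}$; $w$ left (right) special if $|E^L_X(w)|\ge2$ ($|E^R_X(w)|\ge2$). $\mathcal{E}_X(w)$ is the bipartite graph on disjoint copies of $E^L_X(w),E^R_X(w)$ with edges $E_X(w)$; $X$ is dendric if each $\mathcal{E}_X(w)$ is a tree. For total orders $\le^L,\le^R$ on $\mathcal{A}$, $w$ is planar for $(\le^L,\le^R)$ if for all $(a_1,b_1),(a_2,b_2)\in E_X(w)$, $a_1<^La_2$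 implies $b_1\le^Rb_2$; $X$ is planar for $(\le^L,\le^R)$ if every word of $\mathcal{L}(X)$ is. *)

theory Defs
  imports "HOL-Analysis.Analysis"
begin

definition full_shift_top :: "(int \<Rightarrow> 'a) topology" where
  "full_shift_top = product_topology (\<lambda>_. discrete_topology (UNIV :: 'a set)) (UNIV :: int set)"

definition shift_map :: "(int \<Rightarrow> 'a) \<Rightarrow> (int \<Rightarrow> 'a)" where
  "shift_map x = (\<lambda>i. x (i + 1))"

definition shift_invariant :: "(int \<Rightarrow> 'a) set \<Rightarrow> bool" where
  "shift_invariant X \<longleftrightarrow> shift_map ` X = X"

definition lang :: "(int \<Rightarrow> 'a) set \<Rightarrow> 'a list set" where
  "lang X = {w. \<exists>x\<in>X. \<exists>i::int. \<forall>k<length w. x (i + int k) = w ! k}"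

definition shift_space :: "(int \<Rightarrow> 'a::finite) set \<Rightarrow> bool" where
  "shift_space X \<longleftrightarrow> X \<noteq> {} \<and> closedin full_shift_top X \<and> shift_invariant X
     \<and> (\<forall>a. [a] \<in> lang X)"

definition minimal_shift :: "(int \<Rightarrow> 'a::finite) set \<Rightarrow> bool" where
  "minimal_shift X \<longleftrightarrow> shift_space X \<and>
     (\<forall>Y. Y \<subseteq> X \<and> Y \<noteq> {} \<and> closedin full_shift_top Y \<and> shift_invariant Y \<longrightarrow> Y = X)"

definition extL :: "(int \<Rightarrow> 'a) set \<Rightarrow> 'a list \<Rightarrow> 'a set" where
  "extL X w = {a. a # w \<in> lang X}"

definition extR :: "(int \<Rightarrow> 'a) set \<Rightarrow> 'a list \<Rightarrow> 'a set" where
  "extR X w = {b. w @ [b] \<in> lang X}"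

definition ext :: "(int \<Rightarrow> 'a) set \<Rightarrow> 'a list \<Rightarrow> ('a \<times> 'a) set" where
  "ext X w = {(a, b). a # w @ [b] \<in> lang X}"

definition left_special :: "(int \<Rightarrow> 'a) set \<Rightarrow> 'a list \<Rightarrow> bool" where
  "left_special X w \<longleftrightarrow> card (extL X w) \<ge> 2"

definition right_special :: "(int \<Rightarrow> 'a) set \<Rightarrow> 'a list \<Rightarrow> bool" where
  "right_special X w \<longleftrightarrow> card (extR X w) \<ge> 2"

definition graph_connected :: "'v set \<Rightarrow> ('v \<Rightarrow> 'v \<Rightarrow> bool) \<Rightarrow> bool" where
  "graph_connected V adj \<longleftrightarrow>
     (\<forall>u\<in>V. \<forall>v\<in>V. (u, v) \<in> {(p, q). p \<in> V \<and> q \<in> V \<and> adj p q}\<^sup>*)"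

definition graph_acyclic :: "'v set \<Rightarrow> ('v \<Rightarrow> 'v \<Rightarrow> bool) \<Rightarrow> bool" where
  "graph_acyclic V adj \<longleftrightarrow>
     \<not> (\<exists>vs. length vs \<ge> 3 \<and> distinct vs \<and> set vs \<subseteq> V
          \<and> (\<forall>i. Suc i < length vs \<longrightarrow> adj (vs ! i) (vs ! Suc i))
          \<and> adj (last vs) (hd vs))"

definition graph_tree :: "'v set \<Rightarrow> ('v \<Rightarrow> 'v \<Rightarrow> bool) \<Rightarrow> bool" where
  "graph_tree V adj \<longleftrightarrow> V \<noteq> {} \<and> graph_connected V adj \<and> graph_acyclic V adj"

text \<open>Extension graph: bipartite graph on disjoint copies (Inl / Inr) of extL and extR.\<close>
definition ext_graph_vertices :: "(int \<Rightarrow> 'a) set \<Rightarrow> 'a list \<Rightarrow> ('a + 'a) set" where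
  "ext_graph_vertices X w = Inl ` extL X w \<union> Inr ` extR X w"

definition ext_graph_adj :: "(int \<Rightarrow> 'a) set \<Rightarrow> 'a list \<Rightarrow> ('a + 'a) \<Rightarrow> ('a + 'a) \<Rightarrow> bool" where
  "ext_graph_adj X w u v \<longleftrightarrow>
     (\<exists>a b. (a, b) \<in> ext X w \<and> ((u = Inl a \<and> v = Inr b) \<or> (u = Inr b \<and> v = Inl a)))"

definition dendric :: "(int \<Rightarrow> 'a::finite) set \<Rightarrow> bool" where
  "dendric X \<longleftrightarrow> (\<forall>w\<in>lang X. graph_tree (ext_graph_vertices X w) (ext_graph_adj X w))"

text \<open>Total orders on the alphabet are given as relations (non-strict, linear orders on UNIV).\<close>
definition planar_word :: "(int \<Rightarrow> 'a) set \<Rightarrow> 'a rel \<Rightarrow> 'a rel \<Rightarrow> 'a list \<Rightarrow> bool" where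
  "planar_word X rL rR w \<longleftrightarrow>
     (\<forall>a1 b1 a2 b2. (a1, b1) \<in> ext X w \<and> (a2, b2) \<in> ext X w
        \<and> (a1, a2) \<in> rL \<and> a1 \<noteq> a2 \<longrightarrow> (b1, b2) \<in> rR)"

definition planar :: "(int \<Rightarrow> 'a) set \<Rightarrow> 'a rel \<Rightarrow> 'a rel \<Rightarrow> bool" where
  "planar X rL rR \<longleftrightarrow> (\<forall>w\<in>lang X. planar_word X rL rR w)"

definition consecutive :: "'a rel \<Rightarrow> 'a \<Rightarrow> 'a \<Rightarrow> bool" where
  "consecutive r a b \<longleftrightarrow> a \<noteq> b \<and> (a, b) \<in> r \<and>
     \<not> (\<exists>c. c \<noteq> a \<and> c \<noteq> b \<and> (a, c) \<in> r \<and> (c, b) \<in> r)"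

end

theory Submission
  imports Defs
begin


definition eL :: "'a list set \<Rightarrow> 'a list \<Rightarrow> 'a set" where "eL L w = {a. a # w \<in> L}"
definition eR :: "'a list set \<Rightarrow> 'a list \<Rightarrow> 'a set" where "eR L w = {b. w @ [b] \<in> L}"

locale good =
  fixes L :: "'a::finite list set" and rL rR :: "'a rel"
  assumes fact_pre: "u @ v \<in> L \<Longrightarrow> u \<in> L"
    and fact_suf: "u @ v \<in> L \<Longrightarrow> v \<in> L"
    and extr: "w \<in> L \<Longrightarrow> \<exists>c. w @ [c] \<in> L"
    and extl: "w \<in> L \<Longrightarrow> \<exists>c. c # w \<in> L"
    and letters: "[a] \<in> L"
    and linL: "linear_order_on UNIV rL" and linR: "linear_order_on UNIV rR"
    and planar: "a1 # w @ [b1] \<in> L \<Longrightarrow> a2 # w @ [b2] \<in> L \<Longrightarrow> (a1, a2) \<in> rL \<Longrightarrow> a1 \<noteq> a2 \<Longrightarrow> (b1, b2) \<in> rR"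
    and connL: "w \<in> L \<Longrightarrow> S \<subseteq> eL L w \<Longrightarrow> S \<noteq> {} \<Longrightarrow> eL L w - S \<noteq> {} \<Longrightarrow>
         \<exists>d x y. x \<in> S \<and> y \<in> eL L w - S \<and> x # w @ [d] \<in> L \<and> y # w @ [d] \<in> L"
    and connR: "w \<in> L \<Longrightarrow> T \<subseteq> eR L w \<Longrightarrow> T \<noteq> {} \<Longrightarrow> eR L w - T \<noteq> {} \<Longrightarrow>
         \<exists>e x y. x \<in> T \<and> y \<in> eR L w - T \<and> e # w @ [x] \<in> L \<and> e # w @ [y] \<in> L"
    and acyc: "x \<noteq> y \<Longrightarrow> d \<noteq> e \<Longrightarrow> x # w @ [d] \<in> L \<Longrightarrow> y # w @ [d] \<in> L \<Longrightarrow> x # w @ [e] \<in> L \<Longrightarrow> y # w @ [e] \<notin> L"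
    and ur: "\<exists>R. \<forall>w\<in>L. length w \<ge> R \<longrightarrow> b \<in> set w"
begin

lemma rL_refl: "(x, x) \<in> rL" using linL unfolding linear_order_on_def partial_order_on_def preorder_on_def refl_on_def by auto
lemma rL_trans: "(x, y) \<in> rL \<Longrightarrow> (y, z) \<in> rL \<Longrightarrow> (x, z) \<in> rL"
  using linL unfolding linear_order_on_def partial_order_on_def preorder_on_def trans_def by blast
lemma rL_antisym: "(x, y) \<in> rL \<Longrightarrow> (y, x) \<in> rL \<Longrightarrow> x = y"
  using linL unfolding linear_order_on_def partial_order_on_def antisym_def by blast
lemma rL_total: "x \<noteq> y \<Longrightarrow> (x, y) \<in> rL \<or> (y, x) \<in> rL"
  using linL unfolding linear_order_on_def total_on_def by blast
lemma rR_antisym: "(x, y) \<in> rR \<Longrightarrow> (y, x) \<in> rR \<Longrightarrow> x = y"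
  using linR unfolding linear_order_on_def partial_order_on_def antisym_def by blast

lemma pre_Cons: "a # u @ v \<in> L \<Longrightarrow> a # u \<in> L"
  using fact_pre[of "a # u" v] by simp

lemma ext_in: "a # w \<in> L \<Longrightarrow> w \<in> L"
  using fact_suf[of "[a]" w] by simp

lemma left_ext_n: "w \<in> L \<Longrightarrow> \<exists>z. length z = n \<and> z @ w \<in> L"
proof (induction n)
  case 0 then show ?case by simp
next
  case (Suc n)
  then obtain z where "length z = n" "z @ w \<in> L" by blast
  then obtain c where "c # z @ w \<in> L" using extl by blast
  then show ?case using \<open>length z = n\<close> by (intro exI[of _ "c # z"]) simp
qed

lemma uniq2:
  assumes "a \<noteq> b"
  shows "\<forall>w1 w2. length w1 = n \<longrightarrow> length w2 = n \<longrightarrow> a # w1 \<in> L \<longrightarrow> b # w1 \<in> L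
          \<longrightarrow> a # w2 \<in> L \<longrightarrow> b # w2 \<in> L \<longrightarrow> w1 = w2"
proof (induction n)
  case 0 then show ?case by simp
next
  case (Suc n)
  show ?case
  proof (intro allI impI)
    fix w1 w2 :: "'a list"
    assume h: "length w1 = Suc n" "length w2 = Suc n" "a # w1 \<in> L" "b # w1 \<in> L" "a # w2 \<in> L" "b # w2 \<in> L"
    obtain v1 d where v1: "w1 = v1 @ [d]" using h(1) by (metis length_Suc_conv_rev)
    obtain v2 e where v2: "w2 = v2 @ [e]" using h(2) by (metis length_Suc_conv_rev)
    have "v1 = v2" using Suc.IH h v1 v2 pre_Cons by simp
    then show "w1 = w2" using acyc[OF assms, of d e v1] h v1 v2 by auto
  qed
qed

lemma exist2:
  assumes "consecutive rL a b"
  shows "\<exists>w. length w = n \<and> a # w \<in> L \<and> b # w \<in> L"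
proof (induction n)
  case 0 then show ?case using letters by auto
next
  case (Suc n)
  then obtain w where w: "length w = n" "a # w \<in> L" "b # w \<in> L" by blast
  have ab: "a \<noteq> b" "(a, b) \<in> rL" "\<And>c. c \<noteq> a \<Longrightarrow> c \<noteq> b \<Longrightarrow> (a, c) \<in> rL \<Longrightarrow> (c, b) \<notin> rL"
    using assms unfolding consecutive_def by auto
  have wL: "w \<in> L" using w ext_in by blast
  define S where "S = {x \<in> eL L w. (x, a) \<in> rL}"
  have "a \<in> S" using w rL_refl by (simp add: S_def eL_def)
  moreover have "b \<in> eL L w - S" using w ab rL_antisym by (auto simp: S_def eL_def)
  ultimately obtain d x y where d: "x \<in> S" "y \<in> eL L w - S" "x # w @ [d] \<in> L" "y # w @ [d] \<in> L"
    using connL[OF wL, of S] by (auto simp: S_def)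
  have xa: "(x, a) \<in> rL" using d by (simp add: S_def)
  have ya: "(a, y) \<in> rL" "y \<noteq> a" using d rL_total rL_refl by (auto simp: S_def eL_def) (metis rL_refl rL_total)
  have yb: "(b, y) \<in> rL"
  proof (cases "y = b")
    case True then show ?thesis using rL_refl by simp
  next
    case False
    then have "(y, b) \<notin> rL" using ab(3)[of y] ya by simp
    then show ?thesis using rL_total False by blast
  qed
  obtain e where e: "a # w @ [e] \<in> L" using extr w by fastforce
  obtain f where f: "b # w @ [f] \<in> L" using extr w by fastforce
  have "a # w @ [d] \<in> L"
  proof (cases "x = a")
    case True then show ?thesis using d by simp
  next
    case False
    have "(d, e) \<in> rR" using planar[OF d(3) e xa False] .
    moreover have "(e, d) \<in> rR" using planar[OF e d(4) ya(1)] ya(2) by simp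
    ultimately show ?thesis using rR_antisym e by metis
  qed
  moreover have "b # w @ [d] \<in> L"
  proof (cases "y = b")
    case True then show ?thesis using d by simp
  next
    case False
    have xb: "(x, b) \<in> rL" "x \<noteq> b" using rL_trans[OF xa ab(2)] xa ab rL_antisym by auto
    have "(d, f) \<in> rR" using planar[OF d(3) f xb] .
    moreover have "(f, d) \<in> rR" using planar[OF f d(4) yb] False by simp
    ultimately show ?thesis using rR_antisym f by metis
  qed
  ultimately show ?case using w by (intro exI[of _ "w @ [d]"]) simp
qed

lemma interval: "x \<in> eL L w \<Longrightarrow> z \<in> eL L w \<Longrightarrow> (x, y) \<in> rL \<Longrightarrow> (y, z) \<in> rL \<Longrightarrow> y \<in> eL L w"
proof (induction w arbitrary: x z rule: rev_induct)
  case Nil then show ?case using letters by (simp add: eL_def)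
next
  case (snoc c w)
  have xz: "x # w \<in> L" "z # w \<in> L" using snoc.prems pre_Cons by (auto simp: eL_def)
  then have "y # w \<in> L" using snoc.IH[of x z] snoc.prems by (simp add: eL_def)
  then obtain d where d: "y # w @ [d] \<in> L" using extr by fastforce
  have px: "x # w @ [c] \<in> L" and pz: "z # w @ [c] \<in> L" using snoc.prems by (auto simp: eL_def)
  show ?case
  proof (cases "y = x \<or> y = z \<or> d = c")
    case True then show ?thesis using snoc.prems d by (auto simp: eL_def)
  next
    case False
    have "(c, d) \<in> rR" using planar[OF px d] snoc.prems False by auto
    moreover have "(d, c) \<in> rR" using planar[OF d pz] snoc.prems False by auto
    ultimately show ?thesis using rR_antisym False by blast
  qed
qed

lemma three_det:
  assumes abc: "(a, b) \<in> rL" "a \<noteq> b" "(b, c) \<in> rL" "b \<noteq> c"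
  shows "\<forall>u v. length u = n \<longrightarrow> length v = n \<longrightarrow> a # u \<in> L \<longrightarrow> c # u \<in> L \<longrightarrow> b # v \<in> L \<longrightarrow> v = u"
proof (induction n)
  case 0 then show ?case by simp
next
  case (Suc n)
  show ?case
  proof (intro allI impI)
    fix u v :: "'a list"
    assume h: "length u = Suc n" "length v = Suc n" "a # u \<in> L" "c # u \<in> L" "b # v \<in> L"
    obtain u' e where u': "u = u' @ [e]" using h(1) by (metis length_Suc_conv_rev)
    obtain v' d where v': "v = v' @ [d]" using h(2) by (metis length_Suc_conv_rev)
    have "v' = u'" using Suc.IH h u' v' pre_Cons by simp
    then have "(e, d) \<in> rR" "(d, e) \<in> rR" using planar h u' v' abc by auto
    then show "v = u" using rR_antisym u' v' \<open>v' = u'\<close> by blast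
  qed
qed

lemma no_three:
  assumes abc: "(a, b) \<in> rL" "a \<noteq> b" "(b, c) \<in> rL" "b \<noteq> c"
  shows "\<exists>n. \<forall>u. length u = n \<longrightarrow> \<not> (a # u \<in> L \<and> b # u \<in> L \<and> c # u \<in> L)"
proof (rule ccontr)
  assume "\<not> ?thesis"
  then have H: "\<And>n. \<exists>u. length u = n \<and> a # u \<in> L \<and> b # u \<in> L \<and> c # u \<in> L" by blast
  note det = three_det[OF abc, rule_format]
  obtain R0 where R0: "\<forall>w\<in>L. length w \<ge> R0 \<longrightarrow> b \<in> set w" using ur by blast
  define R where "R = Suc R0"
  have R: "\<And>w. w \<in> L \<Longrightarrow> length w \<ge> R \<Longrightarrow> b \<in> set w" using R0 by (auto simp: R_def)
  have R1: "R \<ge> 1" by (simp add: R_def)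
  obtain U where U: "length U = 2 * R" "a # U \<in> L" "b # U \<in> L" "c # U \<in> L" using H by blast
  have pref: "a # take k U \<in> L \<and> c # take k U \<in> L" for k
    using pre_Cons[of a "take k U" "drop k U"] pre_Cons[of c "take k U" "drop k U"] U by simp
  have UL: "U \<in> L" using U ext_in by blast
  have "take R U \<in> L" using fact_pre[of "take R U" "drop R U"] UL by simp
  then have "b \<in> set (take R U)" using R U by simp
  then obtain s where s: "s < R" "U ! s = b" using U by (auto simp: in_set_conv_nth)
  have per: "U ! (s + 1 + k) = U ! k" if "s + 1 + k < length U" for k
  proof -
    have "drop s U \<in> L" using fact_suf[of "take s U" "drop s U"] UL by simp
    moreover have "drop s U = b # drop (Suc s) U" using s U Cons_nth_drop_Suc[of s U] by simp
    ultimately have bd: "b # drop (Suc s) U \<in> L" by simp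
    have "drop (Suc s) U = take (length U - Suc s) U"
      using det[where u="take (length U - Suc s) U" and v="drop (Suc s) U"] pref bd U s by simp
    then have "drop (Suc s) U ! k = take (length U - Suc s) U ! k" by simp
    then show ?thesis using that by simp
  qed
  have "a # take R U \<in> L" using pref by blast
  then obtain z where z: "length z = R" "z @ a # take R U \<in> L" using left_ext_n by blast
  have "z \<in> L" using z fact_pre by blast
  then have "b \<in> set z" using R z by simp
  then obtain i where i: "i < R" "z ! i = b" using z by (auto simp: in_set_conv_nth)
  define W where "W = drop (Suc i) z @ a # take R U"
  have "drop i (z @ a # take R U) \<in> L"
    using fact_suf[of "take i (z @ a # take R U)" "drop i (z @ a # take R U)"] z by (simp only: append_take_drop_id)
  moreover have "drop i (z @ a # take R U) = b # W"
    using i z Cons_nth_drop_Suc[of i "z @ a # take R U"] by (simp add: W_def nth_append)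
  ultimately have bW: "b # W \<in> L" by simp
  have lW: "length W = 2 * R - i" using z i U by (simp add: W_def)
  have WU: "W = take (length W) U"
    using det[where u="take (length W) U" and v=W] pref bW U lW by simp
  define t where "t = R - Suc i"
  have lt: "length (drop (Suc i) z) = t" using z by (simp add: t_def)
  have Ut: "U ! t = a"
  proof -
    have "W ! t = a" using lt by (simp add: W_def nth_append)
    moreover have "t < length W" using lW i by (simp add: t_def)
    ultimately show ?thesis using WU by (metis nth_take)
  qed
  have shift: "U ! (t + 1 + k) = U ! k" if "k < R" for k
  proof -
    have "W ! (t + 1 + k) = U ! k" using lt that U by (simp add: W_def nth_append)
    moreover have "t + 1 + k < length W" using lW i that by (simp add: t_def)
    ultimately show ?thesis using WU by (metis nth_take)
  qed
  have "U ! t = U ! (s + 1 + t)" using per[of t] U s i by (simp add: t_def)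
  also have "\<dots> = U ! (t + 1 + s)" by (simp add: add.commute add.left_commute)
  also have "\<dots> = U ! s" using shift s by simp
  finally have "a = b" using Ut s by simp
  then show False using abc by simp
qed

lemma finite_choice_N:
  fixes Q :: "'b::finite \<Rightarrow> nat \<Rightarrow> bool"
  assumes "\<And>x. \<exists>n. \<forall>m\<ge>n. Q x m"
  shows "\<exists>N. \<forall>x. \<forall>m\<ge>N. Q x m"
proof -
  obtain f where f: "\<And>x. \<forall>m\<ge>f x. Q x m" using assms by metis
  have "f x \<le> Max (range f)" for x by simp
  then show ?thesis using f by (meson le_trans)
qed

theorem left1:
  "\<exists>N. \<forall>w\<in>L. length w \<ge> N \<and> card (eL L w) \<ge> 2 \<longrightarrow>
      (\<exists>a b. eL L w = {a, b} \<and> (consecutive rL a b \<or> consecutive rL b a))"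
proof -
  define Q where "Q = (\<lambda>(abc::'a \<times> 'a \<times> 'a) m. case abc of (a, b, c) \<Rightarrow>
     (a, b) \<in> rL \<and> a \<noteq> b \<and> (b, c) \<in> rL \<and> b \<noteq> c \<longrightarrow>
     (\<forall>u. length u = m \<longrightarrow> \<not> (a # u \<in> L \<and> b # u \<in> L \<and> c # u \<in> L)))"
  have "\<exists>n. \<forall>m\<ge>n. Q abc m" for abc
  proof -
    obtain a b c where abc: "abc = (a, b, c)" by (cases abc) auto
    show ?thesis
    proof (cases "(a, b) \<in> rL \<and> a \<noteq> b \<and> (b, c) \<in> rL \<and> b \<noteq> c")
      case False then show ?thesis by (auto simp: Q_def abc)
    next
      case True
      then obtain n where n: "\<forall>u. length u = n \<longrightarrow> \<not> (a # u \<in> L \<and> b # u \<in> L \<and> c # u \<in> L)"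
        using no_three by blast
      have "Q abc m" if "m \<ge> n" for m
      proof -
        have "\<not> (a # u \<in> L \<and> b # u \<in> L \<and> c # u \<in> L)" if "length u = m" for u
        proof
          assume h: "a # u \<in> L \<and> b # u \<in> L \<and> c # u \<in> L"
          have "a # take n u \<in> L \<and> b # take n u \<in> L \<and> c # take n u \<in> L"
            using h pre_Cons[of _ "take n u" "drop n u"] by simp
          then show False using n \<open>m \<ge> n\<close> that by simp
        qed
        then show ?thesis by (simp add: Q_def abc)
      qed
      then show ?thesis by blast
    qed
  qed
  then obtain N where N: "\<And>abc m. m \<ge> N \<Longrightarrow> Q abc m" using finite_choice_N[of Q] by blast
  have no3: "\<not> (a # w \<in> L \<and> b # w \<in> L \<and> c # w \<in> L)"
    if "length w \<ge> N" "(a, b) \<in> rL" "a \<noteq> b" "(b, c) \<in> rL" "b \<noteq> c" for a b c w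
    using N[of "length w" "(a, b, c)"] that by (simp add: Q_def)
  show ?thesis
  proof (rule exI[of _ N], intro ballI impI)
    fix w assume w: "w \<in> L" "N \<le> length w \<and> 2 \<le> card (eL L w)"
    have fin: "finite (eL L w)" by simp
    have "\<not> card (eL L w) \<le> Suc 0" using w by simp
    then obtain x y where xy: "x \<in> eL L w" "y \<in> eL L w" "x \<noteq> y"
      using card_le_Suc0_iff_eq[OF fin] by blast
    have only: "z = x \<or> z = y" if "z \<in> eL L w" for z
    proof (rule ccontr)
      assume nz: "\<not> (z = x \<or> z = y)"
      have ins: "x # w \<in> L" "y # w \<in> L" "z # w \<in> L" using xy that by (auto simp: eL_def)
      have chain: "\<not> (p # w \<in> L \<and> q # w \<in> L \<and> r # w \<in> L)"
        if "(p, q) \<in> rL" "p \<noteq> q" "(q, r) \<in> rL" "q \<noteq> r" for p q r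
        using no3[OF _ that] w by blast
      show False
      proof (cases "(x, y) \<in> rL")
        case T1: True
        show False
        proof (cases "(y, z) \<in> rL")
          case True then show False using chain[of x y z] T1 ins nz xy by blast
        next
          case F2: False
          then have zy: "(z, y) \<in> rL" using rL_total nz by blast
          show False
          proof (cases "(x, z) \<in> rL")
            case True then show False using chain[of x z y] zy ins nz xy by blast
          next
            case False then have "(z, x) \<in> rL" using rL_total nz by blast
            then show False using chain[of z x y] T1 ins nz xy by blast
          qed
        qed
      next
        case F1: False
        then have yx: "(y, x) \<in> rL" using rL_total xy by blast
        show False
        proof (cases "(x, z) \<in> rL")
          case True then show False using chain[of y x z] yx ins nz xy by blast
        next
          case False then have zx: "(z, x) \<in> rL" using rL_total nz by blast
          show False
          proof (cases "(y, z) \<in> rL")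
            case True then show False using chain[of y z x] zx ins nz xy by blast
          next
            case False then have "(z, y) \<in> rL" using rL_total nz by blast
            then show False using chain[of z y x] yx ins nz xy by blast
          qed
        qed
      qed
    qed
    have E: "eL L w = {x, y}" using only xy by blast
    have cons: "consecutive rL p q" if "(p, q) \<in> rL" "p \<noteq> q" "{p, q} = {x, y}" for p q
    proof -
      have "\<not> (\<exists>c. c \<noteq> p \<and> c \<noteq> q \<and> (p, c) \<in> rL \<and> (c, q) \<in> rL)"
      proof
        assume "\<exists>c. c \<noteq> p \<and> c \<noteq> q \<and> (p, c) \<in> rL \<and> (c, q) \<in> rL"
        then obtain c where c: "c \<noteq> p" "c \<noteq> q" "(p, c) \<in> rL" "(c, q) \<in> rL" by blast
        have "p \<in> eL L w" "q \<in> eL L w" using E that(3) by auto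
        then have "c \<in> eL L w" using interval c by blast
        then show False using E that(3) c by auto
      qed
      then show ?thesis using that unfolding consecutive_def by blast
    qed
    show "\<exists>a b. eL L w = {a, b} \<and> (consecutive rL a b \<or> consecutive rL b a)"
    proof (cases "(x, y) \<in> rL")
      case True then show ?thesis using E cons[of x y] xy by blast
    next
      case False then have "(y, x) \<in> rL" using rL_total xy by blast
      then show ?thesis using E cons[of y x] xy by (metis insert_commute)
    qed
  qed
qed

theorem left2:
  assumes "consecutive rL a b"
  shows "\<exists>!w. w \<in> L \<and> length w = n \<and> card (eL L w) \<ge> 2 \<and> {a, b} \<subseteq> eL L w"
proof -
  have ab: "a \<noteq> b" using assms by (simp add: consecutive_def)
  obtain w where w: "length w = n" "a # w \<in> L" "b # w \<in> L" using exist2[OF assms] by blast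
  have "card {a, b} \<le> card (eL L w)" using w by (intro card_mono) (auto simp: eL_def)
  then have "card (eL L w) \<ge> 2" using ab by simp
  then have "w \<in> L \<and> length w = n \<and> card (eL L w) \<ge> 2 \<and> {a, b} \<subseteq> eL L w" using w ext_in by (auto simp: eL_def)
  moreover have "w' = w" if "length w' = n \<and> {a, b} \<subseteq> eL L w'" for w'
    using uniq2[OF ab, rule_format, of w' n w] that w by (simp add: eL_def)
  ultimately show ?thesis by blast
qed

end



lemma rev_img: "v \<in> rev ` L \<longleftrightarrow> rev v \<in> L"
  by (metis image_iff rev_rev_ident)

lemma eL_rev: "eL (rev ` L) w = eR L (rev w)"
  by (auto simp: eL_def eR_def rev_img)
lemma eR_rev: "eR (rev ` L) w = eL L (rev w)"
  by (auto simp: eL_def eR_def rev_img)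

lemma good_rev:
  assumes "good L rL rR"
  shows "good (rev ` L) rR rL"
proof -
  interpret good L rL rR by fact
  show ?thesis
  proof
    fix u v assume "u @ v \<in> rev ` L" then show "u \<in> rev ` L"
      using fact_suf[of "rev v" "rev u"] by (simp add: rev_img)
  next
    fix u v assume "u @ v \<in> rev ` L" then show "v \<in> rev ` L"
      using fact_pre[of "rev v" "rev u"] by (simp add: rev_img)
  next
    fix w assume "w \<in> rev ` L" then show "\<exists>c. w @ [c] \<in> rev ` L"
      using extl[of "rev w"] by (simp add: rev_img)
  next
    fix w assume "w \<in> rev ` L" then show "\<exists>c. c # w \<in> rev ` L"
      using extr[of "rev w"] by (simp add: rev_img)
  next
    fix a show "[a] \<in> rev ` L" using letters by (simp add: rev_img)
  next
    show "linear_order_on UNIV rR" by (rule linR)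
  next
    show "linear_order_on UNIV rL" by (rule linL)
  next
    fix a1 w b1 a2 b2
    assume h: "a1 # w @ [b1] \<in> rev ` L" "a2 # w @ [b2] \<in> rev ` L" "(a1, a2) \<in> rR" "a1 \<noteq> a2"
    then have h': "b1 # rev w @ [a1] \<in> L" "b2 # rev w @ [a2] \<in> L" by (auto simp: rev_img)
    show "(b1, b2) \<in> rL"
    proof (rule ccontr)
      assume "(b1, b2) \<notin> rL"
      then have ne: "b2 \<noteq> b1" using rL_refl by auto
      have "(b2, b1) \<in> rL" using rL_total ne \<open>(b1, b2) \<notin> rL\<close> by blast
      then have "(a2, a1) \<in> rR" using planar[OF h'(2) h'(1)] ne by simp
      then show False using h rR_antisym by blast
    qed
  next
    fix w S assume h: "w \<in> rev ` L" "S \<subseteq> eL (rev ` L) w" "S \<noteq> {}" "eL (rev ` L) w - S \<noteq> {}"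
    then obtain e x y where "x \<in> S" "y \<in> eR L (rev w) - S" "e # rev w @ [x] \<in> L" "e # rev w @ [y] \<in> L"
      using connR[where w="rev w" and T=S] by (auto simp: rev_img eL_rev)
    then show "\<exists>d x y. x \<in> S \<and> y \<in> eL (rev ` L) w - S \<and> x # w @ [d] \<in> rev ` L \<and> y # w @ [d] \<in> rev ` L"
      by (intro exI[of _ e] exI[of _ x] exI[of _ y]) (auto simp: rev_img eL_rev)
  next
    fix w T assume h: "w \<in> rev ` L" "T \<subseteq> eR (rev ` L) w" "T \<noteq> {}" "eR (rev ` L) w - T \<noteq> {}"
    then obtain d x y where "x \<in> T" "y \<in> eL L (rev w) - T" "x # rev w @ [d] \<in> L" "y # rev w @ [d] \<in> L"
      using connL[where w="rev w" and S=T] by (auto simp: rev_img eR_rev)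
    then show "\<exists>e x y. x \<in> T \<and> y \<in> eR (rev ` L) w - T \<and> e # w @ [x] \<in> rev ` L \<and> e # w @ [y] \<in> rev ` L"
      by (intro exI[of _ d] exI[of _ x] exI[of _ y]) (auto simp: rev_img eR_rev)
  next
    fix x y d e w
    assume h: "x \<noteq> y" "d \<noteq> e" "x # w @ [d] \<in> rev ` L" "y # w @ [d] \<in> rev ` L" "x # w @ [e] \<in> rev ` L"
    then show "y # w @ [e] \<notin> rev ` L"
      using acyc[where x=d and y=e and d=x and w="rev w" and e=y] by (auto simp: rev_img)
  next
    fix b show "\<exists>R. \<forall>w\<in>rev ` L. length w \<ge> R \<longrightarrow> b \<in> set w"
    proof -
      obtain R where "\<forall>w\<in>L. length w \<ge> R \<longrightarrow> b \<in> set w" using ur[of b] by blast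
      then have "\<forall>w\<in>rev ` L. length w \<ge> R \<longrightarrow> b \<in> set w" by auto
      then show ?thesis by blast
    qed
  qed
qed

lemma right1:
  assumes "good L rL rR"
  shows "\<exists>N. \<forall>w\<in>L. length w \<ge> N \<and> card (eR L w) \<ge> 2 \<longrightarrow>
      (\<exists>a b. eR L w = {a, b} \<and> (consecutive rR a b \<or> consecutive rR b a))"
proof -
  obtain N where N: "\<forall>v\<in>rev ` L. length v \<ge> N \<and> card (eL (rev ` L) v) \<ge> 2 \<longrightarrow>
      (\<exists>a b. eL (rev ` L) v = {a, b} \<and> (consecutive rR a b \<or> consecutive rR b a))"
    using good.left1[OF good_rev[OF assms]] by blast
  show ?thesis
  proof (rule exI[of _ N], intro ballI impI)
    fix w assume "w \<in> L" "N \<le> length w \<and> 2 \<le> card (eR L w)"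
    then show "\<exists>a b. eR L w = {a, b} \<and> (consecutive rR a b \<or> consecutive rR b a)"
      using N[rule_format, of "rev w"] by (simp add: rev_img eL_rev)
  qed
qed

lemma right2:
  assumes "good L rL rR" "consecutive rR a b"
  shows "\<exists>!w. w \<in> L \<and> length w = n \<and> card (eR L w) \<ge> 2 \<and> {a, b} \<subseteq> eR L w"
proof -
  have "\<exists>!v. v \<in> rev ` L \<and> length v = n \<and> card (eL (rev ` L) v) \<ge> 2 \<and> {a, b} \<subseteq> eL (rev ` L) v"
    using good.left2[OF good_rev[OF assms(1)] assms(2)] .
  then obtain v where v: "v \<in> rev ` L \<and> length v = n \<and> card (eL (rev ` L) v) \<ge> 2 \<and> {a, b} \<subseteq> eL (rev ` L) v"
    and u: "\<And>v'. v' \<in> rev ` L \<and> length v' = n \<and> card (eL (rev ` L) v') \<ge> 2 \<and> {a, b} \<subseteq> eL (rev ` L) v' \<Longrightarrow> v' = v"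
    by (elim ex1E) metis
  show ?thesis
  proof (rule ex1I[of _ "rev v"])
    show "rev v \<in> L \<and> length (rev v) = n \<and> card (eR L (rev v)) \<ge> 2 \<and> {a, b} \<subseteq> eR L (rev v)"
      using v by (simp add: rev_img eL_rev)
  next
    fix w assume "w \<in> L \<and> length w = n \<and> card (eR L w) \<ge> 2 \<and> {a, b} \<subseteq> eR L w"
    then have "rev w = v" using u[of "rev w"] by (simp add: rev_img eL_rev)
    then show "w = rev v" by auto
  qed
qed




lemma lang_app:
  assumes "u @ v \<in> lang X" shows "u \<in> lang X" "v \<in> lang X"
proof -
  obtain x i where x: "x \<in> X" "\<forall>k<length (u @ v). x (i + int k) = (u @ v) ! k"
    using assms unfolding lang_def by blast
  show "u \<in> lang X" unfolding lang_def using x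
    by (intro CollectI bexI[of _ x] exI[of _ i]) (auto simp: nth_append)
  have "\<forall>k<length v. x (i + int (length u) + int k) = v ! k"
  proof (intro allI impI)
    fix k assume "k < length v"
    then have "length u + k < length (u @ v)" by simp
    then have "x (i + int (length u + k)) = (u @ v) ! (length u + k)" using x(2) by blast
    moreover have "i + int (length u + k) = i + int (length u) + int k" by simp
    ultimately show "x (i + int (length u) + int k) = v ! k" by (simp add: nth_append add.assoc)
  qed
  then show "v \<in> lang X" unfolding lang_def using x by blast
qed

lemma lang_extr: "w \<in> lang X \<Longrightarrow> \<exists>c. w @ [c] \<in> lang X"
proof -
  assume "w \<in> lang X"
  then obtain x i where x: "x \<in> X" "\<forall>k<length w. x (i + int k) = w ! k"
    unfolding lang_def by blast
  have "\<forall>k<length (w @ [x (i + int (length w))]). x (i + int k) = (w @ [x (i + int (length w))]) ! k"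
    using x by (auto simp: nth_append less_Suc_eq)
  then show ?thesis unfolding lang_def using x by blast
qed

lemma lang_extl: "w \<in> lang X \<Longrightarrow> \<exists>c. c # w \<in> lang X"
proof -
  assume "w \<in> lang X"
  then obtain x i where x: "x \<in> X" "\<forall>k<length w. x (i + int k) = w ! k"
    unfolding lang_def by blast
  have "\<forall>k<length (x (i - 1) # w). x (i - 1 + int k) = (x (i - 1) # w) ! k"
  proof (intro allI impI)
    fix k assume k: "k < length (x (i - 1) # w)"
    show "x (i - 1 + int k) = (x (i - 1) # w) ! k"
    proof (cases k)
      case 0 then show ?thesis by simp
    next
      case (Suc k') then show ?thesis using x k by simp
    qed
  qed
  then show ?thesis unfolding lang_def using x by blast
qed

lemma extL_eq: "extL X w = eL (lang X) w" by (simp add: extL_def eL_def)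
lemma extR_eq: "extR X w = eR (lang X) w" by (simp add: extR_def eR_def)

lemma connL_X:
  assumes den: "dendric X" and w: "w \<in> lang X" and S: "S \<subseteq> eL (lang X) w" "S \<noteq> {}" "eL (lang X) w - S \<noteq> {}"
  shows "\<exists>d x y. x \<in> S \<and> y \<in> eL (lang X) w - S \<and> x # w @ [d] \<in> lang X \<and> y # w @ [d] \<in> lang X"
proof (rule ccontr)
  assume no: "\<not> ?thesis"
  obtain x0 y0 where xy: "x0 \<in> S" "y0 \<in> eL (lang X) w - S" using S by blast
  define V where "V = ext_graph_vertices X w"
  define Rel where "Rel = {(p, q). p \<in> V \<and> q \<in> V \<and> ext_graph_adj X w p q}"
  have conn: "graph_connected V (ext_graph_adj X w)"
    using den w unfolding dendric_def graph_tree_def V_def by blast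
  have "Inl x0 \<in> V" "Inl y0 \<in> V" using xy S by (auto simp: V_def ext_graph_vertices_def extL_eq)
  then have path: "(Inl x0, Inl y0) \<in> Rel\<^sup>*" using conn unfolding graph_connected_def Rel_def by blast
  define Q where "Q = Inl ` S \<union> Inr ` {d. \<exists>x\<in>S. x # w @ [d] \<in> lang X}"
  have "q \<in> Q" if "(p, q) \<in> Rel\<^sup>*" "p \<in> Q" for p q
    using that
  proof (induction rule: rtrancl_induct)
    case base then show ?case .
  next
    case (step q r)
    then obtain a b where ab: "(a, b) \<in> ext X w" "(q = Inl a \<and> r = Inr b) \<or> (q = Inr b \<and> r = Inl a)"
      unfolding Rel_def ext_graph_adj_def by blast
    have abL: "a # w @ [b] \<in> lang X" using ab by (simp add: ext_def)
    show ?case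
    proof (cases "q = Inl a \<and> r = Inr b")
      case True
      then have "a \<in> S" using step.IH step.prems by (auto simp: Q_def)
      then show ?thesis using True abL by (auto simp: Q_def)
    next
      case False
      then have qr: "q = Inr b" "r = Inl a" using ab by auto
      then obtain x where x: "x \<in> S" "x # w @ [b] \<in> lang X" using step.IH step.prems by (auto simp: Q_def)
      have "a \<in> eL (lang X) w" using abL lang_app(1)[of "a # w" "[b]"] by (simp add: eL_def)
      then have "a \<in> S" using no x abL by blast
      then show ?thesis using qr by (simp add: Q_def)
    qed
  qed
  then have "Inl y0 \<in> Q" using path xy by (auto simp: Q_def)
  then show False using xy by (auto simp: Q_def)
qed

lemma connR_X:
  assumes den: "dendric X" and w: "w \<in> lang X" and T: "T \<subseteq> eR (lang X) w" "T \<noteq> {}" "eR (lang X) w - T \<noteq> {}"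
  shows "\<exists>e x y. x \<in> T \<and> y \<in> eR (lang X) w - T \<and> e # w @ [x] \<in> lang X \<and> e # w @ [y] \<in> lang X"
proof (rule ccontr)
  assume no: "\<not> ?thesis"
  obtain x0 y0 where xy: "x0 \<in> T" "y0 \<in> eR (lang X) w - T" using T by blast
  define V where "V = ext_graph_vertices X w"
  define Rel where "Rel = {(p, q). p \<in> V \<and> q \<in> V \<and> ext_graph_adj X w p q}"
  have conn: "graph_connected V (ext_graph_adj X w)"
    using den w unfolding dendric_def graph_tree_def V_def by blast
  have "Inr x0 \<in> V" "Inr y0 \<in> V" using xy T by (auto simp: V_def ext_graph_vertices_def extR_eq)
  then have path: "(Inr x0, Inr y0) \<in> Rel\<^sup>*" using conn unfolding graph_connected_def Rel_def by blast
  define Q where "Q = Inr ` T \<union> Inl ` {e. \<exists>x\<in>T. e # w @ [x] \<in> lang X}"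
  have "q \<in> Q" if "(p, q) \<in> Rel\<^sup>*" "p \<in> Q" for p q
    using that
  proof (induction rule: rtrancl_induct)
    case base then show ?case .
  next
    case (step q r)
    then obtain a b where ab: "(a, b) \<in> ext X w" "(q = Inl a \<and> r = Inr b) \<or> (q = Inr b \<and> r = Inl a)"
      unfolding Rel_def ext_graph_adj_def by blast
    have abL: "a # w @ [b] \<in> lang X" using ab by (simp add: ext_def)
    show ?case
    proof (cases "q = Inr b \<and> r = Inl a")
      case True
      then have "b \<in> T" using step.IH step.prems by (auto simp: Q_def)
      then show ?thesis using True abL by (auto simp: Q_def)
    next
      case False
      then have qr: "q = Inl a" "r = Inr b" using ab by auto
      then obtain x where x: "x \<in> T" "a # w @ [x] \<in> lang X" using step.IH step.prems by (auto simp: Q_def)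
      have "b \<in> eR (lang X) w" using abL lang_app(2)[of "[a]" "w @ [b]"] by (simp add: eR_def)
      then have "b \<in> T" using no x abL by blast
      then show ?thesis using qr by (simp add: Q_def)
    qed
  qed
  then have "Inr y0 \<in> Q" using path xy by (auto simp: Q_def)
  then show False using xy by (auto simp: Q_def)
qed

lemma acyc_X:
  assumes den: "dendric X" and h: "x \<noteq> y" "d \<noteq> e" "x # w @ [d] \<in> lang X" "y # w @ [d] \<in> lang X"
    "x # w @ [e] \<in> lang X"
  shows "y # w @ [e] \<notin> lang X"
proof
  assume ye: "y # w @ [e] \<in> lang X"
  have wL: "w \<in> lang X" using h(3) lang_app[of "[x]" "w @ [d]"] lang_app[of w "[d]"] by simp
  have acyc: "graph_acyclic (ext_graph_vertices X w) (ext_graph_adj X w)"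
    using den wL unfolding dendric_def graph_tree_def by blast
  define vs where "vs = [Inl x, Inr d, Inl y, Inr e]"
  have inL: "x \<in> extL X w" "y \<in> extL X w"
    using h(3) ye lang_app(1)[of "x # w" "[d]"] lang_app(1)[of "y # w" "[e]"] by (auto simp: extL_def)
  have inR: "d \<in> extR X w" "e \<in> extR X w"
    using h(3) ye lang_app(2)[of "[x]" "w @ [d]"] lang_app(2)[of "[y]" "w @ [e]"] by (auto simp: extR_def)
  have E: "(x, d) \<in> ext X w" "(y, d) \<in> ext X w" "(x, e) \<in> ext X w" "(y, e) \<in> ext X w"
    using h ye by (auto simp: ext_def)
  have adj: "\<forall>i. Suc i < length vs \<longrightarrow> ext_graph_adj X w (vs ! i) (vs ! Suc i)"
  proof (intro allI impI)
    fix i assume "Suc i < length vs"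
    then have "i = 0 \<or> i = 1 \<or> i = 2" by (auto simp: vs_def)
    then show "ext_graph_adj X w (vs ! i) (vs ! Suc i)"
      using E unfolding ext_graph_adj_def vs_def by auto
  qed
  have "ext_graph_adj X w (last vs) (hd vs)"
    using E unfolding ext_graph_adj_def vs_def by auto
  moreover have "length vs \<ge> 3" "distinct vs" "set vs \<subseteq> ext_graph_vertices X w"
    using h inL inR by (auto simp: vs_def ext_graph_vertices_def)
  ultimately show False using acyc adj unfolding graph_acyclic_def by blast
qed




lemma shift_fwd: "shift_invariant X \<Longrightarrow> x \<in> X \<Longrightarrow> (\<lambda>j. x (j + 1)) \<in> X"
  unfolding shift_invariant_def shift_map_def by blast

lemma shift_back: "shift_invariant X \<Longrightarrow> x \<in> X \<Longrightarrow> (\<lambda>j. x (j - 1)) \<in> X"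
proof -
  assume si: "shift_invariant X" and x: "x \<in> X"
  then obtain y where y: "y \<in> X" "x = shift_map y" unfolding shift_invariant_def by blast
  have "(\<lambda>j. x (j - 1)) = y" using y by (auto simp: shift_map_def)
  then show ?thesis using y by simp
qed

lemma shift_nat: "shift_invariant X \<Longrightarrow> \<forall>x\<in>X. (\<lambda>j. x (j + int n)) \<in> X \<and> (\<lambda>j. x (j - int n)) \<in> X"
proof (induction n)
  case 0 then show ?case by simp
next
  case (Suc n)
  show ?case
  proof
    fix x assume x: "x \<in> X"
    have a: "(\<lambda>j. x (j + int n)) \<in> X" "(\<lambda>j. x (j - int n)) \<in> X" using Suc x by auto
    have "(\<lambda>j. (\<lambda>j. x (j + int n)) (j + 1)) \<in> X" using shift_fwd[OF Suc.prems a(1)] .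
    moreover have "(\<lambda>j. (\<lambda>j. x (j - int n)) (j - 1)) \<in> X" using shift_back[OF Suc.prems a(2)] .
    ultimately show "(\<lambda>j. x (j + int (Suc n))) \<in> X \<and> (\<lambda>j. x (j - int (Suc n))) \<in> X"
      by (simp add: algebra_simps)
  qed
qed

lemma shift_int: "shift_invariant X \<Longrightarrow> x \<in> X \<Longrightarrow> (\<lambda>j. x (j + k)) \<in> X"
proof (cases "k \<ge> 0")
  case True
  assume "shift_invariant X" "x \<in> X"
  then have "(\<lambda>j. x (j + int (nat k))) \<in> X" using shift_nat by blast
  then show ?thesis using True by simp
next
  case False
  assume "shift_invariant X" "x \<in> X"
  then have "(\<lambda>j. x (j - int (nat (- k)))) \<in> X" using shift_nat by blast
  then show ?thesis using False by simp
qed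

lemma topspace_fs: "topspace (full_shift_top :: (int \<Rightarrow> 'a) topology) = UNIV"
  by (simp add: full_shift_top_def)

lemma closed_coord: "closedin (full_shift_top :: (int \<Rightarrow> 'a) topology) {y. y j \<noteq> b}"
proof -
  have "closedin full_shift_top {y \<in> topspace (full_shift_top :: (int \<Rightarrow> 'a) topology). y j \<in> UNIV - {b}}"
    unfolding full_shift_top_def
    by (rule closedin_continuous_map_preimage[OF continuous_map_product_projection]) auto
  then show ?thesis by (simp add: topspace_fs)
qed

lemma closed_avoid: "closedin (full_shift_top :: (int \<Rightarrow> 'a) topology) {y. \<forall>j. y j \<noteq> b}"
proof -
  have "closedin full_shift_top (\<Inter> ((\<lambda>j. {y :: int \<Rightarrow> 'a. y j \<noteq> b}) ` UNIV))"
    by (rule closedin_Inter) (auto intro: closed_coord)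
  moreover have "\<Inter> ((\<lambda>j. {y :: int \<Rightarrow> 'a. y j \<noteq> b}) ` UNIV) = {y. \<forall>j. y j \<noteq> b}" by auto
  ultimately show ?thesis by simp
qed

lemma compact_fs: "compact_space (full_shift_top :: (int \<Rightarrow> 'a::finite) topology)"
  unfolding full_shift_top_def compact_space_product_topology
  by (simp add: compact_space_discrete_topology)

lemma ur_X:
  fixes X :: "(int \<Rightarrow> 'a::finite) set"
  assumes min: "minimal_shift X"
  shows "\<exists>R. \<forall>w\<in>lang X. length w \<ge> R \<longrightarrow> b \<in> set w"
proof (rule ccontr)
  assume "\<not> ?thesis"
  then have NR: "\<And>R. \<exists>w\<in>lang X. length w \<ge> R \<and> b \<notin> set w" by auto
  have ss: "shift_space X" using min by (simp add: minimal_shift_def)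
  then have clX: "closedin full_shift_top X" and si: "shift_invariant X" and lett: "\<And>a. [a] \<in> lang X"
    by (auto simp: shift_space_def)
  have cX: "compactin full_shift_top X" using closedin_compact_space[OF compact_fs clX] .
  define U where "U = (\<lambda>j. {y :: int \<Rightarrow> 'a. y j \<noteq> b}) ` UNIV"
  have "X \<inter> \<Inter> U \<noteq> {}"
  proof -
    have fip: "X \<inter> \<Inter> F \<noteq> {}" if F: "finite F" "F \<subseteq> U" for F
    proof -
      have "\<forall>C\<in>F. \<exists>j. C = {y. y j \<noteq> b}" using F by (auto simp: U_def)
      then obtain g where g: "\<And>C. C \<in> F \<Longrightarrow> C = {y. y (g C) \<noteq> b}" by metis
      define R where "R = Max (insert 0 ((\<lambda>C. nat \<bar>g C\<bar>) ` F))"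
      have gR: "nat \<bar>g C\<bar> \<le> R" if "C \<in> F" for C
        unfolding R_def using F(1) that by (intro Max_ge) auto
      obtain w where w: "w \<in> lang X" "length w \<ge> 2 * R + 1" "b \<notin> set w" using NR by blast
      then obtain x i where x: "x \<in> X" "\<forall>k<length w. x (i + int k) = w ! k"
        unfolding lang_def by blast
      define z where "z = (\<lambda>j. x (j + (i + int R)))"
      have zX: "z \<in> X" unfolding z_def using shift_int[OF si x(1)] .
      have "z \<in> C" if "C \<in> F" for C
      proof -
        define j where "j = g C"
        have jR: "\<bar>j\<bar> \<le> int R" using gR[OF that] by (simp add: j_def)
        define k where "k = nat (j + int R)"
        have k: "k < length w" "int k = j + int R" using jR w(2) by (auto simp: k_def)
        have "z j = x (i + int k)" using k by (simp add: z_def algebra_simps)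
        also have "\<dots> = w ! k" using x k by blast
        finally have "z j \<in> set w" using k by simp
        then have "z j \<noteq> b" using w by auto
        then have "z \<in> {y. y (g C) \<noteq> b}" by (simp add: j_def)
        then show ?thesis using g[OF that] by simp
      qed
      then show ?thesis using zX by blast
    qed
    have "\<forall>C\<in>U. closedin full_shift_top C" by (auto simp: U_def intro: closed_coord)
    then show ?thesis using cX fip unfolding compactin_fip by blast
  qed
  then obtain p where p: "p \<in> X" "\<And>j. p j \<noteq> b" by (auto simp: U_def)
  define Y where "Y = X \<inter> {y. \<forall>j. y j \<noteq> b}"
  have "Y \<subseteq> X" "Y \<noteq> {}" using p by (auto simp: Y_def)
  moreover have "closedin full_shift_top Y" unfolding Y_def using clX closed_avoid by (rule closedin_Int)
  moreover have "shift_invariant Y"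
  proof -
    have "shift_map ` Y \<subseteq> Y"
      using shift_fwd[OF si] by (auto simp: Y_def shift_map_def)
    moreover have "Y \<subseteq> shift_map ` Y"
    proof
      fix y assume y: "y \<in> Y"
      have "(\<lambda>j. y (j - 1)) \<in> Y" using shift_back[OF si] y by (auto simp: Y_def)
      moreover have "y = shift_map (\<lambda>j. y (j - 1))" by (simp add: shift_map_def)
      ultimately show "y \<in> shift_map ` Y" by blast
    qed
    ultimately show ?thesis by (simp add: shift_invariant_def)
  qed
  ultimately have "Y = X" using min unfolding minimal_shift_def by blast
  moreover obtain x i where "x \<in> X" "x i = b"
    using lett[of b] unfolding lang_def by fastforce
  ultimately show False by (auto simp: Y_def)
qed

lemma good_X:
  fixes X :: "(int \<Rightarrow> 'a::finite) set"
  assumes "minimal_shift X" and "dendric X"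
    and "linear_order_on UNIV rL" and "linear_order_on UNIV rR"
    and "planar X rL rR"
  shows "good (lang X) rL rR"
proof
  fix u v assume "u @ v \<in> lang X" then show "u \<in> lang X" by (rule lang_app)
next
  fix u v assume "u @ v \<in> lang X" then show "v \<in> lang X" by (rule lang_app)
next
  fix w assume "w \<in> lang X" then show "\<exists>c. w @ [c] \<in> lang X" by (rule lang_extr)
next
  fix w assume "w \<in> lang X" then show "\<exists>c. c # w \<in> lang X" by (rule lang_extl)
next
  fix a show "[a] \<in> lang X" using assms(1) by (simp add: minimal_shift_def shift_space_def)
next
  show "linear_order_on UNIV rL" by fact
next
  show "linear_order_on UNIV rR" by fact
next
  fix a1 w b1 a2 b2
  assume h: "a1 # w @ [b1] \<in> lang X" "a2 # w @ [b2] \<in> lang X" "(a1, a2) \<in> rL" "a1 \<noteq> a2"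
  have "w \<in> lang X" using h(1) lang_app[of "[a1]" "w @ [b1]"] lang_app[of w "[b1]"] by simp
  then have "planar_word X rL rR w" using assms(5) by (simp add: planar_def)
  then show "(b1, b2) \<in> rR" using h unfolding planar_word_def ext_def by blast
next
  fix w S assume "w \<in> lang X" "S \<subseteq> eL (lang X) w" "S \<noteq> {}" "eL (lang X) w - S \<noteq> {}"
  then show "\<exists>d x y. x \<in> S \<and> y \<in> eL (lang X) w - S \<and> x # w @ [d] \<in> lang X \<and> y # w @ [d] \<in> lang X"
    using connL_X[OF assms(2)] by blast
next
  fix w T assume "w \<in> lang X" "T \<subseteq> eR (lang X) w" "T \<noteq> {}" "eR (lang X) w - T \<noteq> {}"
  then show "\<exists>e x y. x \<in> T \<and> y \<in> eR (lang X) w - T \<and> e # w @ [x] \<in> lang X \<and> e # w @ [y] \<in> lang X"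
    using connR_X[OF assms(2)] by blast
next
  fix x y d e w
  assume "x \<noteq> y" "d \<noteq> e" "x # w @ [d] \<in> lang X" "y # w @ [d] \<in> lang X" "x # w @ [e] \<in> lang X"
  then show "y # w @ [e] \<notin> lang X" using acyc_X[OF assms(2)] by blast
next
  fix b show "\<exists>R. \<forall>w\<in>lang X. length w \<ge> R \<longrightarrow> b \<in> set w" using ur_X[OF assms(1)] .
qed

theorem mainTheorem17:
  fixes X :: "(int \<Rightarrow> 'a::finite) set" and rL rR :: "'a rel"
  assumes "minimal_shift X" and "dendric X"
    and "linear_order_on UNIV rL" and "linear_order_on UNIV rR"
    and "planar X rL rR"
  shows "(\<exists>N. \<forall>w\<in>lang X. length w \<ge> N \<and> left_special X w \<longrightarrow>
              (\<exists>a b. extL X w = {a, b} \<and> (consecutive rL a b \<or> consecutive rL b a)))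
       \<and> (\<forall>a b n. consecutive rL a b \<longrightarrow>
              (\<exists>!w. w \<in> lang X \<and> length w = n \<and> left_special X w \<and> {a, b} \<subseteq> extL X w))
       \<and> (\<exists>N. \<forall>w\<in>lang X. length w \<ge> N \<and> right_special X w \<longrightarrow>
              (\<exists>a b. extR X w = {a, b} \<and> (consecutive rR a b \<or> consecutive rR b a)))
       \<and> (\<forall>a b n. consecutive rR a b \<longrightarrow>
              (\<exists>!w. w \<in> lang X \<and> length w = n \<and> right_special X w \<and> {a, b} \<subseteq> extR X w))"
proof -
  have g: "good (lang X) rL rR" using good_X[OF assms] .
  show ?thesis
    unfolding left_special_def right_special_def extL_eq extR_eq
    using good.left1[OF g] good.left2[OF g] right1[OF g] right2[OF g] by blast
qed


end
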